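(* Let $f:\Omega_D\to\mathbb{O}$ be a function of class $C^2$. Then $f$ is a slice function if and only if, on $\Omega_D\setminus\mathbb{R}$, for all $m,n\in\{1,\dots,7\}$ with $m<n$, $L_{mn}\big(\mathrm{Im}^{-1}\Gamma(f)\big)=0$ and $L_{mn}\big(f-\tfrac16\Gamma(f)\big)=0$, where $\mathrm{Im}^{-1}\Gamma(f)$ denotes the function $x\mapsto\mathrm{Im}(x)^{-1}(\Gamma(f)(x))$ on $\Omega_D\setminus\mathbb{R}$.
   Context: Octonions $\mathbb{O}=\mathbb{H}+\ell\mathbb{H}$ with product $(a+\ell b)(c+\ell d)=(ac-d\bar b)+\ell(\bar a d+cb)$; real basis $(1,e_1,\dots,e_7)=(1,i,j,k,\ell,\ell i,\ell j,\ell k)$, $x=x_0+\sum_{h=1}^7x_he_h$, $\mathrm{Im}(x)=\sum_{h=1}^7x_he_h$. $\mathbb{S}=\{I\in\mathbb{O}:I^2=-1\}$. $D\subset\mathbb{R}^2$ non-empty open, invariant under $(\alpha,\beta)\mapsto(\alpha,-\beta)$, $\Omega_D=\{\alpha+\beta I:(\alpha,\beta)\in D,I\in\mathbb{S}\}$, assumed connected. $f:\Omega_D\to\mathbb{O}$ is a slice function if $f(\alpha+\beta I)=F_1(\alpha,\beta)+IF_2(\alpha,\beta)$ for all $(\alpha,\beta)\in D$, $I\in\mathbb{S}$, for some $(F_1,F_2):D\to\mathbb{O}^2$ with $F_1$ even and $F_2$ odd in $\beta$. For $m<n$, $L_{mn}=x_m\frac{\partial}{\partial x_n}-x_n\frac{\partial}{\partial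 x_m}$, and $\Gamma(f)(x)=-\sum_{1\le m<n\le7}e_m\big(e_n\,L_{mn}(f)(x)\big)$. *)

theory Defs
  imports "HOL-Analysis.Analysis"
begin

text \<open>Octonions are modelled as real^8 with coordinates x_0,...,x_7 w.r.t. the
real basis (1,i,j,k,l,li,lj,lk). The Euclidean norm of real^8 is the octonion norm.
Octonion multiplication is defined by the Cayley-Dickson formula
(a + l b)(c + l d) = (a c - d conj b) + l (conj a d + c b) on quaternion pairs.\<close>

type_synonym oct = "real^8"

definition oidx :: "nat \<Rightarrow> 8" where "oidx h = of_nat h"

definition ebas :: "nat \<Rightarrow> oct" where "ebas h = axis (oidx h) 1"

definition comp :: "oct \<Rightarrow> nat \<Rightarrow> real" where "comp x h = x $ oidx h"

text \<open>Quaternions as coefficient functions on 0..3 (basis 1,i,j,k).\<close>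
definition hmul :: "(nat \<Rightarrow> real) \<Rightarrow> (nat \<Rightarrow> real) \<Rightarrow> nat \<Rightarrow> real" where
  "hmul p q h =
     (if h = 0 then p 0 * q 0 - p 1 * q 1 - p 2 * q 2 - p 3 * q 3
      else if h = 1 then p 0 * q 1 + p 1 * q 0 + p 2 * q 3 - p 3 * q 2
      else if h = 2 then p 0 * q 2 - p 1 * q 3 + p 2 * q 0 + p 3 * q 1
      else if h = 3 then p 0 * q 3 + p 1 * q 2 - p 2 * q 1 + p 3 * q 0
      else 0)"

definition hconj :: "(nat \<Rightarrow> real) \<Rightarrow> nat \<Rightarrow> real" where
  "hconj p h = (if h = 0 then p 0 else - p h)"

definition omul :: "oct \<Rightarrow> oct \<Rightarrow> oct" where
  "omul x y =
    (let a = (\<lambda>h. comp x h); b = (\<lambda>h. comp x (h + 4));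
         c = (\<lambda>h. comp y h); d = (\<lambda>h. comp y (h + 4));
         u = (\<lambda>h. hmul a c h - hmul d (hconj b) h);
         v = (\<lambda>h. hmul (hconj a) d h + hmul c b h)
     in (\<Sum>h<4. u h *\<^sub>R ebas h) + (\<Sum>h<4. v h *\<^sub>R ebas (h + 4)))"

definition oIm :: "oct \<Rightarrow> oct" where
  "oIm x = (\<Sum>h\<in>{1..7}. comp x h *\<^sub>R ebas h)"

definition oconj :: "oct \<Rightarrow> oct" where
  "oconj x = comp x 0 *\<^sub>R ebas 0 - oIm x"

definition oinv :: "oct \<Rightarrow> oct" where
  "oinv x = (1 / (norm x)\<^sup>2) *\<^sub>R oconj x"

definition SS :: "oct set" where "SS = {I. omul I I = - ebas 0}"

definition oreals :: "oct set" where "oreals = {x. \<exists>r::real. x = r *\<^sub>R ebas 0}"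

definition OmegaD :: "(real \<times> real) set \<Rightarrow> oct set" where
  "OmegaD D = {x. \<exists>\<alpha> \<beta> I. (\<alpha>, \<beta>) \<in> D \<and> I \<in> SS \<and> x = \<alpha> *\<^sub>R ebas 0 + \<beta> *\<^sub>R I}"

definition slice_function :: "(real \<times> real) set \<Rightarrow> (oct \<Rightarrow> oct) \<Rightarrow> bool" where
  "slice_function D f \<longleftrightarrow>
     (\<exists>F1 F2 :: real \<times> real \<Rightarrow> oct.
        (\<forall>\<alpha> \<beta>. (\<alpha>, \<beta>) \<in> D \<longrightarrow> F1 (\<alpha>, - \<beta>) = F1 (\<alpha>, \<beta>) \<and> F2 (\<alpha>, - \<beta>) = - F2 (\<alpha>, \<beta>)) \<and>
        (\<forall>\<alpha> \<beta> I. (\<alpha>, \<beta>) \<in> D \<longrightarrow> I \<in> SS \<longrightarrow>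
            f (\<alpha> *\<^sub>R ebas 0 + \<beta> *\<^sub>R I) = F1 (\<alpha>, \<beta>) + omul I (F2 (\<alpha>, \<beta>))))"

definition pd :: "nat \<Rightarrow> (oct \<Rightarrow> oct) \<Rightarrow> oct \<Rightarrow> oct" where
  "pd n g x = frechet_derivative g (at x) (ebas n)"

definition C2_on :: "oct set \<Rightarrow> (oct \<Rightarrow> oct) \<Rightarrow> bool" where
  "C2_on U f \<longleftrightarrow>
     (\<forall>x\<in>U. f differentiable (at x)) \<and>
     (\<forall>i<8. \<forall>x\<in>U. pd i f differentiable (at x)) \<and>
     (\<forall>i<8. \<forall>j<8. continuous_on U (pd j (pd i f)))"

definition Lop :: "nat \<Rightarrow> nat \<Rightarrow> (oct \<Rightarrow> oct) \<Rightarrow> oct \<Rightarrow> oct" where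
  "Lop m n g x = comp x m *\<^sub>R pd n g x - comp x n *\<^sub>R pd m g x"

definition Gamma :: "(oct \<Rightarrow> oct) \<Rightarrow> oct \<Rightarrow> oct" where
  "Gamma f x = - (\<Sum>m\<in>{1..7}. \<Sum>n\<in>{m<..7}. omul (ebas m) (omul (ebas n) (Lop m n f x)))"

end

theory Submission
  imports Defs
begin

lemma card8: "CARD(8) = 8" by simp

lemma UNIV8: "(UNIV :: 8 set) = oidx ` {..<8}"
proof -
  have e: "oidx ` {..<8} = {0,1,2,3,4,5,6,7::8}"
    by (simp add: oidx_def lessThan_nat_numeral lessThan_Suc insert_commute)
  have "card (oidx ` {..<8}) = 8" unfolding e by simp
  then show ?thesis
    using card_subset_eq[of UNIV "oidx ` {..<8}"] card8 by simp
qed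

lemma oidx_inj: "inj_on oidx {..<8}"
proof -
  have "card (oidx ` {..<8}) = card {..<8::nat}"
    by (metis UNIV8 card_lessThan card8)
  then show ?thesis by (simp add: eq_card_imp_inj_on)
qed

lemma oidx_eq: "h < 8 \<Longrightarrow> k < 8 \<Longrightarrow> oidx h = oidx k \<longleftrightarrow> h = k"
  using oidx_inj by (auto simp: inj_on_def)

lemma oct_eq: "x = y \<longleftrightarrow> (\<forall>k<8. comp x k = comp y k)"
proof (intro iffI)
  assume a: "\<forall>k<8. comp x k = comp y k"
  show "x = y" unfolding vec_eq_iff
  proof
    fix i :: 8
    have "i \<in> oidx ` {..<8}" using UNIV8 by blast
    then show "x $ i = y $ i" using a by (auto simp: comp_def)
  qed
qed simp

lemma oct_eqI: "(\<And>k. k < 8 \<Longrightarrow> comp x k = comp y k) \<Longrightarrow> x = y"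
  using oct_eq by blast

lemma comp_ebas: "h < 8 \<Longrightarrow> k < 8 \<Longrightarrow> comp (ebas h) k = (if h = k then 1 else 0)"
  by (simp add: comp_def ebas_def axis_def oidx_eq)

lemma comp_add[simp]: "comp (x + y) k = comp x k + comp y k" by (simp add: comp_def)
lemma comp_diff[simp]: "comp (x - y) k = comp x k - comp y k" by (simp add: comp_def)
lemma comp_minus[simp]: "comp (- x) k = - comp x k" by (simp add: comp_def)
lemma comp_scaleR[simp]: "comp (a *\<^sub>R x) k = a * comp x k" by (simp add: comp_def)
lemma comp_zero[simp]: "comp 0 k = 0" by (simp add: comp_def)
lemma comp_sum[simp]: "comp (sum f A) k = (\<Sum>i\<in>A. comp (f i) k)" by (simp add: comp_def)



lemma comp_omul_0: "comp (omul x y) 0 = comp x 0 * comp y 0 - comp x 1 * comp y 1 - comp x 2 * comp y 2 - comp x 3 * comp y 3 - (comp y 4 * comp x 4 + comp y 5 * comp x 5 + comp y 6 * comp x 6 + comp y 7 * comp x 7)"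
  unfolding omul_def Let_def
  by (simp add: lessThan_nat_numeral comp_ebas hmul_def hconj_def)

lemma comp_omul_1: "comp (omul x y) 1 = comp x 0 * comp y 1 + comp x 1 * comp y 0 + comp x 2 * comp y 3 - comp x 3 * comp y 2 - (comp y 5 * comp x 4 - comp y 4 * comp x 5 - comp y 6 * comp x 7 + comp y 7 * comp x 6)"
  unfolding omul_def Let_def
  by (simp add: lessThan_nat_numeral comp_ebas hmul_def hconj_def)

lemma comp_omul_2: "comp (omul x y) 2 = comp x 0 * comp y 2 - comp x 1 * comp y 3 + comp x 2 * comp y 0 + comp x 3 * comp y 1 - (comp y 5 * comp x 7 - comp y 4 * comp x 6 + comp y 6 * comp x 4 - comp y 7 * comp x 5)"
  unfolding omul_def Let_def
  by (simp add: lessThan_nat_numeral comp_ebas hmul_def hconj_def)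

lemma comp_omul_3: "comp (omul x y) 3 = comp x 0 * comp y 3 + comp x 1 * comp y 2 - comp x 2 * comp y 1 + comp x 3 * comp y 0 - (- (comp y 4 * comp x 7) - comp y 5 * comp x 6 + comp y 6 * comp x 5 + comp y 7 * comp x 4)"
  unfolding omul_def Let_def
  by (simp add: lessThan_nat_numeral comp_ebas hmul_def hconj_def)

lemma comp_omul_4: "comp (omul x y) 4 = comp x 0 * comp y 4 + comp x 1 * comp y 5 + comp x 2 * comp y 6 + comp x 3 * comp y 7 + (comp y 0 * comp x 4 - comp y 1 * comp x 5 - comp y 2 * comp x 6 - comp y 3 * comp x 7)"
  unfolding omul_def Let_def
  by (simp add: lessThan_nat_numeral comp_ebas hmul_def hconj_def)

lemma comp_omul_5: "comp (omul x y) 5 = comp x 0 * comp y 5 - comp x 1 * comp y 4 - comp x 2 * comp y 7 + comp x 3 * comp y 6 + (comp y 0 * comp x 5 + comp y 1 * comp x 4 + comp y 2 * comp x 7 - comp y 3 * comp x 6)"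
  unfolding omul_def Let_def
  by (simp add: lessThan_nat_numeral comp_ebas hmul_def hconj_def)

lemma comp_omul_6: "comp (omul x y) 6 = comp x 0 * comp y 6 + comp x 1 * comp y 7 - comp x 2 * comp y 4 - comp x 3 * comp y 5 + (comp y 0 * comp x 6 - comp y 1 * comp x 7 + comp y 2 * comp x 4 + comp y 3 * comp x 5)"
  unfolding omul_def Let_def
  by (simp add: lessThan_nat_numeral comp_ebas hmul_def hconj_def)

lemma comp_omul_7: "comp (omul x y) 7 = comp x 0 * comp y 7 - comp x 1 * comp y 6 + comp x 2 * comp y 5 - comp x 3 * comp y 4 + (comp y 0 * comp x 7 + comp y 1 * comp x 6 - comp y 2 * comp x 5 + comp y 3 * comp x 4)"
  unfolding omul_def Let_def
  by (simp add: lessThan_nat_numeral comp_ebas hmul_def hconj_def)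


lemmas comp_omul_1' = comp_omul_1[unfolded One_nat_def]
lemmas comp_omul = comp_omul_1' comp_omul_0 comp_omul_1 comp_omul_2 comp_omul_3 comp_omul_4 comp_omul_5 comp_omul_6 comp_omul_7

lemma less8_cases: "k < (8::nat) \<Longrightarrow> k=0 \<or> k=1 \<or> k=2 \<or> k=3 \<or> k=4 \<or> k=5 \<or> k=6 \<or> k=7"
  by auto

lemma sum8: "(\<Sum>k<(8::nat). f k) = f 0 + f 1 + f 2 + f 3 + f 4 + f 5 + f 6 + f 7"
  by (simp add: eval_nat_numeral)

lemma inner_oct: "inner x y = (\<Sum>k<8. comp x k * comp y k)"
proof -
  have "inner x y = (\<Sum>i\<in>UNIV. x$i * y$i)" by (simp add: inner_vec_def)
  also have "\<dots> = (\<Sum>k<8. comp x k * comp y k)"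
    unfolding UNIV8 by (simp add: sum.reindex[OF oidx_inj] comp_def)
  finally show ?thesis .
qed

lemma norm_oct: "(norm x)\<^sup>2 = (\<Sum>k<8. (comp x k)\<^sup>2)"
  unfolding power2_norm_eq_inner inner_oct by (simp add: power2_eq_square)

lemma omul_add_left: "omul (x + y) z = omul x z + omul y z"
  by (rule oct_eqI) (auto dest!: less8_cases simp: comp_omul algebra_simps)
lemma omul_add_right: "omul z (x + y) = omul z x + omul z y"
  by (rule oct_eqI) (auto dest!: less8_cases simp: comp_omul algebra_simps)
lemma omul_scaleR_left: "omul (a *\<^sub>R x) z = a *\<^sub>R omul x z"
  by (rule oct_eqI) (auto dest!: less8_cases simp: comp_omul algebra_simps)
lemma omul_scaleR_right: "omul z (a *\<^sub>R x) = a *\<^sub>R omul z x"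
  by (rule oct_eqI) (auto dest!: less8_cases simp: comp_omul algebra_simps)

lemma omul_minus_left: "omul (- x) z = - omul x z"
  by (rule oct_eqI) (auto dest!: less8_cases simp: comp_omul algebra_simps)
lemma omul_minus_right: "omul z (- x) = - omul z x"
  by (rule oct_eqI) (auto dest!: less8_cases simp: comp_omul algebra_simps)

lemma omul_diff_left: "omul (x - y) z = omul x z - omul y z"
  by (rule oct_eqI) (auto dest!: less8_cases simp: comp_omul algebra_simps)
lemma omul_diff_right: "omul z (x - y) = omul z x - omul z y"
  by (rule oct_eqI) (auto dest!: less8_cases simp: comp_omul algebra_simps)

lemma omul_bilinear: "bounded_bilinear omul"
  unfolding bilinear_conv_bounded_bilinear[symmetric] bilinear_def
  by (auto intro!: linearI simp: omul_add_left omul_add_right omul_scaleR_left omul_scaleR_right)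

lemma sum17: "(\<Sum>h\<in>{1..7::nat}. f h) = f 1 + f 2 + f 3 + f 4 + f 5 + f 6 + f 7"
  by (simp add: eval_nat_numeral atLeastAtMostSuc_conv add_ac)

lemma comp_oIm: "k < 8 \<Longrightarrow> comp (oIm x) k = (if k = 0 then 0 else comp x k)"
  unfolding oIm_def sum17 by (auto dest!: less8_cases simp: comp_ebas)

lemma comp_oIm0[simp]: "comp (oIm x) 0 = 0" by (simp add: comp_oIm)

lemma oIm_decomp: "x = comp x 0 *\<^sub>R ebas 0 + oIm x"
  by (rule oct_eqI) (auto dest!: less8_cases simp: comp_ebas comp_oIm)

lemma oIm_imag: "comp a 0 = 0 \<Longrightarrow> oIm a = a"
  by (rule oct_eqI) (auto simp: comp_oIm)

lemma oIm_oIm[simp]: "oIm (oIm x) = oIm x" by (simp add: oIm_imag)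

lemma oIm_linear: "oIm (x + y) = oIm x + oIm y" "oIm (c *\<^sub>R x) = c *\<^sub>R oIm x" "oIm (ebas 0) = 0"
    "oIm (- x) = - oIm x" "oIm (x - y) = oIm x - oIm y"
  by (rule oct_eqI; auto simp: comp_oIm comp_ebas)+

lemma oinv_imag: "comp a 0 = 0 \<Longrightarrow> oinv a = - (1 / (norm a)\<^sup>2) *\<^sub>R a"
  unfolding oinv_def oconj_def by (simp add: oIm_imag)

lemma omul_twice: assumes "comp a 0 = 0" shows "omul a (omul a x) = - ((norm a)\<^sup>2) *\<^sub>R x"
  unfolding norm_oct sum8
  by (rule oct_eqI) (auto dest!: less8_cases simp: comp_omul assms algebra_simps power2_eq_square)

lemma omul_inv_cancel: assumes "comp a 0 = 0" "a \<noteq> 0"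
  shows "omul (oinv a) (omul a x) = x" "omul a (omul (oinv a) x) = x"
  using assms by (simp_all add: oinv_imag omul_scaleR_left omul_scaleR_right omul_twice omul_minus_left omul_minus_right)

lemma omul_self: "omul x x = ((comp x 0)\<^sup>2 - (norm (oIm x))\<^sup>2) *\<^sub>R ebas 0 + (2 * comp x 0) *\<^sub>R oIm x"
  unfolding norm_oct sum8
  by (rule oct_eqI) (auto dest!: less8_cases simp: comp_omul comp_oIm comp_ebas algebra_simps power2_eq_square)

lemma SS_iff: "I \<in> SS \<longleftrightarrow> comp I 0 = 0 \<and> norm I = 1"
proof
  assume "I \<in> SS"
  then have e: "((comp I 0)\<^sup>2 - (norm (oIm I))\<^sup>2) *\<^sub>R ebas 0 + (2 * comp I 0) *\<^sub>R oIm I = - ebas 0"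
    unfolding SS_def by (simp add: omul_self)
  have c0: "(comp I 0)\<^sup>2 - (norm (oIm I))\<^sup>2 = -1"
    using arg_cong[OF e, of "\<lambda>v. comp v 0"] by (simp add: comp_ebas)
  have c1: "(2 * comp I 0) *\<^sub>R oIm I = 0"
    using arg_cong[OF e, of oIm] by (simp add: oIm_linear)
  have "comp I 0 = 0"
  proof (rule ccontr)
    assume "comp I 0 \<noteq> 0"
    then have "oIm I = 0" using c1 by simp
    then have "(comp I 0)\<^sup>2 = -1" using c0 by simp
    then show False using zero_le_power2[of "comp I 0"] by linarith
  qed
  moreover then have "oIm I = I" by (simp add: oIm_imag)
  ultimately have "(norm I)\<^sup>2 = 1" using c0 by simp
  then have "norm I = 1" using norm_ge_zero[of I] by (simp add: power2_eq_1_iff)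
  with \<open>comp I 0 = 0\<close> show "comp I 0 = 0 \<and> norm I = 1" by simp
next
  assume a: "comp I 0 = 0 \<and> norm I = 1"
  then show "I \<in> SS" unfolding SS_def by (simp add: omul_self oIm_imag)
qed
lemma sum_gt7: "(\<Sum>n\<in>{m<..7::nat}. g n) = (\<Sum>n\<in>{1..7}. if m < n then g n else 0)"
proof -
  have "(\<Sum>n\<in>{1..7}. if m < n then g n else 0) = sum g {n\<in>{1..7}. m < n}"
    by (rule sum.inter_filter[symmetric]) simp
  also have "{n\<in>{1..7}. m < n} = {m<..7::nat}" by auto
  finally show ?thesis by simp
qed

lemma dsum_real: "(\<Sum>m\<in>{1..7::nat}. \<Sum>n\<in>{m<..7}. a m + a n) = 6 * (\<Sum>h\<in>{1..7}. (a h :: real))"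
  unfolding sum_gt7 sum17 by simp

lemma dsum_oct: "(\<Sum>m\<in>{1..7::nat}. \<Sum>n\<in>{m<..7}. a m + a n) = (6::real) *\<^sub>R (\<Sum>h\<in>{1..7}. (a h :: oct))"
proof (rule oct_eqI)
  fix k show "comp (\<Sum>m\<in>{1..7::nat}. \<Sum>n\<in>{m<..7}. a m + a n) k = comp ((6::real) *\<^sub>R (\<Sum>h\<in>{1..7}. (a h :: oct))) k"
    using dsum_real[of "\<lambda>i. comp (a i) k"] by simp
qed

lemma omul_anticomm: assumes "comp a 0 = 0" "comp b 0 = 0"
  shows "omul a (omul b x) + omul b (omul a x) = - (2 * inner a b) *\<^sub>R x"
proof -
  have ab: "comp (a + b) 0 = 0" using assms by simp
  have "omul (a + b) (omul (a + b) x) = - ((norm (a + b))\<^sup>2) *\<^sub>R x" by (rule omul_twice[OF ab])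
  moreover have "(norm (a + b))\<^sup>2 = (norm a)\<^sup>2 + 2 * inner a b + (norm b)\<^sup>2"
    by (simp add: power2_norm_eq_inner inner_add_left inner_add_right inner_commute)
  moreover have "omul (a + b) (omul (a + b) x) = omul a (omul a x) + omul b (omul b x) + (omul a (omul b x) + omul b (omul a x))"
    by (simp add: omul_add_left omul_add_right algebra_simps)
  ultimately have "- ((norm a)\<^sup>2 + 2 * inner a b + (norm b)\<^sup>2) *\<^sub>R x = - ((norm a)\<^sup>2) *\<^sub>R x + - ((norm b)\<^sup>2) *\<^sub>R x + (omul a (omul b x) + omul b (omul a x))"
    using omul_twice[OF assms(1), of x] omul_twice[OF assms(2), of x] by simp
  then show ?thesis by (simp add: algebra_simps)
qed

lemma inner_ebas: "m < 8 \<Longrightarrow> n < 8 \<Longrightarrow> inner (ebas m) (ebas n) = (if m = n then 1 else 0)"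
  unfolding inner_oct sum8 by (auto dest!: less8_cases simp: comp_ebas)

lemma norm_ebas: "m < 8 \<Longrightarrow> norm (ebas m) = 1"
  using inner_ebas[of m m] by (simp add: norm_eq_sqrt_inner)

lemma comp_ebas0: "1 \<le> m \<Longrightarrow> m < 8 \<Longrightarrow> comp (ebas m) 0 = 0"
  by (simp add: comp_ebas)

lemma ebas_sq: "1 \<le> m \<Longrightarrow> m < 8 \<Longrightarrow> omul (ebas m) (omul (ebas m) x) = - x"
  using omul_twice[OF comp_ebas0, of m x] norm_ebas[of m] by simp

lemma ebas_moufang: assumes "1 \<le> m" "m < 8" "1 \<le> n" "n < 8" "m \<noteq> n"
  shows "omul (ebas m) (omul (ebas n) (omul (ebas m) x)) = omul (ebas n) x"
proof -
  have "omul (ebas m) (omul (ebas n) y) = - omul (ebas n) (omul (ebas m) y)" for y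
    using omul_anticomm[OF comp_ebas0 comp_ebas0, of m n y] assms inner_ebas[of m n]
    by (simp add: eq_neg_iff_add_eq_0)
  then show ?thesis using ebas_sq[of m x] assms by (simp add: omul_minus_right)
qed

lemma omul_sum_left: "omul (\<Sum>i\<in>A. f i) x = (\<Sum>i\<in>A. omul (f i) x)"
  by (rule bounded_bilinear.sum_left[OF omul_bilinear])

lemma gamma_sum: "- (\<Sum>m\<in>{1..7}. \<Sum>n\<in>{m<..7}. omul (ebas m) (omul (ebas n) (omul (comp w m *\<^sub>R ebas n - comp w n *\<^sub>R ebas m) F)))
   = 6 *\<^sub>R omul (oIm w) F"
proof -
  define a where "a h = comp w h *\<^sub>R omul (ebas h) F" for h
  have t: "omul (ebas m) (omul (ebas n) (omul (comp w m *\<^sub>R ebas n - comp w n *\<^sub>R ebas m) F)) = - (a m + a n)"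
    if "m \<in> {1..7}" "n \<in> {m<..7}" for m n
  proof -
    have mn: "1 \<le> m" "m < 8" "1 \<le> n" "n < 8" "m \<noteq> n" using that by auto
    have "omul (ebas m) (omul (ebas n) (omul (comp w m *\<^sub>R ebas n - comp w n *\<^sub>R ebas m) F))
      = comp w m *\<^sub>R omul (ebas m) (omul (ebas n) (omul (ebas n) F)) - comp w n *\<^sub>R omul (ebas m) (omul (ebas n) (omul (ebas m) F))"
      by (simp only: omul_diff_left omul_diff_right omul_scaleR_left omul_scaleR_right)
    also have "\<dots> = - (a m + a n)"
      using ebas_sq[OF mn(3,4), of F] ebas_moufang[OF mn, of F]
      by (simp add: a_def omul_minus_right)
    finally show ?thesis .
  qed
  have "- (\<Sum>m\<in>{1..7}. \<Sum>n\<in>{m<..7}. omul (ebas m) (omul (ebas n) (omul (comp w m *\<^sub>R ebas n - comp w n *\<^sub>R ebas m) F)))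
     = - (\<Sum>m\<in>{1..7}. \<Sum>n\<in>{m<..7}. - (a m + a n))"
    using t by (intro arg_cong[where f=uminus] sum.cong refl) auto
  also have "\<dots> = 6 *\<^sub>R (\<Sum>h\<in>{1..7}. a h)"
    by (simp only: sum_negf minus_minus) (rule dsum_oct)
  also have "\<dots> = 6 *\<^sub>R omul (oIm w) F"
    by (simp add: oIm_def omul_sum_left a_def omul_scaleR_left)
  finally show ?thesis .
qed



definition rot :: "nat \<Rightarrow> nat \<Rightarrow> oct \<Rightarrow> real \<Rightarrow> oct" where
  "rot m n z t = z + (cos t - 1) *\<^sub>R (comp z m *\<^sub>R ebas m + comp z n *\<^sub>R ebas n)
      + sin t *\<^sub>R (comp z m *\<^sub>R ebas n - comp z n *\<^sub>R ebas m)"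

lemma curve_deriv:
  "((\<lambda>t. A + (cos t - 1) *\<^sub>R B + sin t *\<^sub>R C) has_vector_derivative (- sin t *\<^sub>R B + cos t *\<^sub>R C)) (at t)"
  by (auto intro!: derivative_eq_intros simp: has_vector_derivative_def algebra_simps)

lemma comp_rot: "j < 8 \<Longrightarrow> m < 8 \<Longrightarrow> n < 8 \<Longrightarrow> comp (rot m n z t) j =
   comp z j + (cos t - 1) * ((if m = j then comp z m else 0) + (if n = j then comp z n else 0))
   + sin t * ((if n = j then comp z m else 0) - (if m = j then comp z n else 0))"
  by (simp add: rot_def comp_ebas)

lemma comp_rot_m: "m < 8 \<Longrightarrow> n < 8 \<Longrightarrow> m \<noteq> n \<Longrightarrow> comp (rot m n z t) m = cos t * comp z m - sin t * comp z n"
  by (simp add: comp_rot algebra_simps)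
lemma comp_rot_n: "m < 8 \<Longrightarrow> n < 8 \<Longrightarrow> m \<noteq> n \<Longrightarrow> comp (rot m n z t) n = cos t * comp z n + sin t * comp z m"
  by (simp add: comp_rot algebra_simps)

lemma rot_deriv: assumes "m < 8" "n < 8" "m \<noteq> n"
  shows "(rot m n z has_vector_derivative (comp (rot m n z t) m *\<^sub>R ebas n - comp (rot m n z t) n *\<^sub>R ebas m)) (at t)"
proof -
  have "(rot m n z has_vector_derivative (- sin t *\<^sub>R (comp z m *\<^sub>R ebas m + comp z n *\<^sub>R ebas n) + cos t *\<^sub>R (comp z m *\<^sub>R ebas n - comp z n *\<^sub>R ebas m))) (at t)"
    unfolding rot_def[abs_def] by (rule curve_deriv)
  moreover have "- sin t *\<^sub>R (comp z m *\<^sub>R ebas m + comp z n *\<^sub>R ebas n) + cos t *\<^sub>R (comp z m *\<^sub>R ebas n - comp z n *\<^sub>R ebas m)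
     = comp (rot m n z t) m *\<^sub>R ebas n - comp (rot m n z t) n *\<^sub>R ebas m"
    using assms by (simp add: comp_rot_m comp_rot_n algebra_simps)
  ultimately show ?thesis by simp
qed

lemma rot0: "rot m n z 0 = z" by (simp add: rot_def)

lemma Lop_deriv: assumes "(g has_derivative g') (at w)"
  shows "Lop m n g w = g' (comp w m *\<^sub>R ebas n - comp w n *\<^sub>R ebas m)"
proof -
  have "linear g'" using assms has_derivative_linear by blast
  moreover have "pd k g w = g' (ebas k)" for k
    unfolding pd_def using frechet_derivative_at[OF assms] by simp
  ultimately show ?thesis unfolding Lop_def by (simp add: linear_diff linear_scale)
qed

lemma comp_chain: assumes "(c has_vector_derivative v) (at t)" "(g has_derivative g') (at (c t))"
  shows "((\<lambda>s. g (c s)) has_vector_derivative g' v) (at t)"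
proof -
  have "((g \<circ> c) has_derivative (g' \<circ> (\<lambda>h. h *\<^sub>R v))) (at t)"
    using diff_chain_at assms(1) assms(2) unfolding has_vector_derivative_def by blast
  moreover have "linear g'" using assms(2) has_derivative_linear by blast
  ultimately show ?thesis unfolding has_vector_derivative_def o_def
    by (simp add: linear_scale)
qed

lemma ROTDERIV: assumes "m < 8" "n < 8" "m \<noteq> n" "g differentiable (at z)"
    and "\<And>t. g (rot m n z t) = A + (cos t - 1) *\<^sub>R B + sin t *\<^sub>R C"
  shows "Lop m n g z = C"
proof -
  obtain g' where g': "(g has_derivative g') (at z)" using assms(4) differentiable_def by blast
  have "((\<lambda>s. g (rot m n z s)) has_vector_derivative g' (comp z m *\<^sub>R ebas n - comp z n *\<^sub>R ebas m)) (at 0)"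
    using comp_chain[OF rot_deriv[OF assms(1-3), of z 0]] g' by (simp add: rot0)
  moreover have "((\<lambda>s. g (rot m n z s)) has_vector_derivative (- sin 0 *\<^sub>R B + cos 0 *\<^sub>R C)) (at 0)"
    unfolding assms(5) by (rule curve_deriv)
  ultimately have "g' (comp z m *\<^sub>R ebas n - comp z n *\<^sub>R ebas m) = C"
    using vector_derivative_unique_at by fastforce
  then show ?thesis using Lop_deriv[OF g'] by simp
qed

lemma ROTCONST: assumes "m < 8" "n < 8" "m \<noteq> n"
    and "\<And>t. g differentiable (at (rot m n z t)) \<and> Lop m n g (rot m n z t) = 0"
  shows "g (rot m n z t) = g z"
proof -
  have "((\<lambda>s. g (rot m n z s)) has_derivative (\<lambda>h. 0)) (at s within UNIV)" for s
  proof -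
    obtain g' where g': "(g has_derivative g') (at (rot m n z s))" using assms(4) differentiable_def by blast
    have "((\<lambda>s. g (rot m n z s)) has_vector_derivative g' (comp (rot m n z s) m *\<^sub>R ebas n - comp (rot m n z s) n *\<^sub>R ebas m)) (at s)"
      by (rule comp_chain[OF rot_deriv[OF assms(1-3)] g'])
    moreover have "g' (comp (rot m n z s) m *\<^sub>R ebas n - comp (rot m n z s) n *\<^sub>R ebas m) = 0"
      using Lop_deriv[OF g', of m n] assms(4)[of s] by simp
    ultimately show ?thesis by (simp add: has_vector_derivative_def)
  qed
  then obtain c where "\<forall>x\<in>UNIV. g (rot m n z x) = c"
    using has_derivative_zero_constant[of UNIV "\<lambda>s. g (rot m n z s)"] by auto
  then have "g (rot m n z t) = c" "g (rot m n z 0) = c" by auto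
  then show ?thesis by (simp add: rot0)
qed

lemma rot_comp0: "1 \<le> m \<Longrightarrow> m < 8 \<Longrightarrow> 1 \<le> n \<Longrightarrow> n < 8 \<Longrightarrow> comp (rot m n z t) 0 = comp z 0"
  by (simp add: comp_rot)

lemma oIm_ebas: "1 \<le> m \<Longrightarrow> m < 8 \<Longrightarrow> oIm (ebas m) = ebas m"
  by (simp add: oIm_imag comp_ebas0)

lemma inner_ebas_right: "m < 8 \<Longrightarrow> inner x (ebas m) = comp x m"
proof -
  assume m: "m < 8"
  have "inner x (ebas m) = (\<Sum>k<8. if m = k then comp x k else 0)"
    unfolding inner_oct by (intro sum.cong refl) (simp add: comp_ebas m)
  also have "\<dots> = comp x m" using m by (simp add: sum.delta)
  finally show ?thesis .
qed

lemma norm_rot: assumes "1 \<le> m" "m < 8" "1 \<le> n" "n < 8" "m \<noteq> n"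
  shows "norm (oIm (rot m n z t)) = norm (oIm z)"
proof -
  define a where "a = oIm z"
  define P where "P = comp z m *\<^sub>R ebas m + comp z n *\<^sub>R ebas n"
  define Q where "Q = comp z m *\<^sub>R ebas n - comp z n *\<^sub>R ebas m"
  have am: "comp a m = comp z m" "comp a n = comp z n" using assms by (simp_all add: a_def comp_oIm)
  have e: "oIm (rot m n z t) = a + (cos t - 1) *\<^sub>R P + sin t *\<^sub>R Q"
    using assms by (simp add: rot_def oIm_linear oIm_ebas a_def P_def Q_def)
  have ee: "inner (ebas m) (ebas m) = 1" "inner (ebas n) (ebas n) = 1" "inner (ebas m) (ebas n) = 0" "inner (ebas n) (ebas m) = 0"
    using assms by (simp_all add: inner_ebas)
  have iaP: "inner a P = (comp z m)\<^sup>2 + (comp z n)\<^sup>2"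
    using assms am by (simp add: P_def inner_add_right inner_ebas_right power2_eq_square)
  have iaQ: "inner a Q = 0"
    using assms am by (simp add: Q_def inner_diff_right inner_ebas_right)
  have iPa: "inner P a = (comp z m)\<^sup>2 + (comp z n)\<^sup>2" "inner Q a = 0"
    using iaP iaQ by (simp_all add: inner_commute)
  have iPP: "inner P P = (comp z m)\<^sup>2 + (comp z n)\<^sup>2"
    using ee by (simp add: P_def inner_add_right inner_add_left power2_eq_square)
  have iQQ: "inner Q Q = (comp z m)\<^sup>2 + (comp z n)\<^sup>2"
    using ee by (simp add: Q_def inner_diff_right inner_diff_left power2_eq_square)
  have iPQ: "inner P Q = 0"
    using ee by (simp add: P_def Q_def inner_diff_right inner_add_left algebra_simps)
  have sc: "cos t * cos t + sin t * sin t = 1" using sin_cos_squared_add[of t] by (simp add: power2_eq_square)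
  have "(norm (oIm (rot m n z t)))\<^sup>2 = inner a a"
    unfolding e power2_norm_eq_inner
    apply (simp add: inner_add_left inner_add_right inner_commute iaP iaQ iPa iPP iPQ iQQ algebra_simps power2_eq_square)
    using sc by algebra
  then have "(norm (oIm (rot m n z t)))\<^sup>2 = (norm (oIm z))\<^sup>2"
    by (simp add: a_def power2_norm_eq_inner)
  then show ?thesis by (simp add: power2_eq_iff_nonneg)
qed

lemma OmegaD_iff: assumes sym: "\<And>\<alpha> \<beta>. (\<alpha>, \<beta>) \<in> D \<Longrightarrow> (\<alpha>, - \<beta>) \<in> D"
  shows "x \<in> OmegaD D \<longleftrightarrow> (comp x 0, norm (oIm x)) \<in> D"
proof
  assume "x \<in> OmegaD D"
  then obtain \<alpha> \<beta> I where h: "(\<alpha>, \<beta>) \<in> D" "I \<in> SS" "x = \<alpha> *\<^sub>R ebas 0 + \<beta> *\<^sub>R I"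
    unfolding OmegaD_def by blast
  have I: "comp I 0 = 0" "norm I = 1" using h(2) SS_iff by auto
  have "comp x 0 = \<alpha>" using h(3) I by (simp add: comp_ebas)
  moreover have "oIm x = \<beta> *\<^sub>R I" using h(3) I by (simp add: oIm_linear oIm_imag)
  ultimately show "(comp x 0, norm (oIm x)) \<in> D"
    using h(1) sym I by (cases "\<beta> \<ge> 0") auto
next
  assume a: "(comp x 0, norm (oIm x)) \<in> D"
  show "x \<in> OmegaD D"
  proof (cases "oIm x = 0")
    case True
    have "ebas 1 \<in> SS" by (simp add: SS_iff comp_ebas norm_ebas)
    moreover have "x = comp x 0 *\<^sub>R ebas 0 + 0 *\<^sub>R ebas 1" using oIm_decomp[of x] True by simp
    ultimately show ?thesis using a True unfolding OmegaD_def by force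
  next
    case False
    define I where "I = (1 / norm (oIm x)) *\<^sub>R oIm x"
    have "I \<in> SS" using False by (simp add: SS_iff I_def)
    moreover have "x = comp x 0 *\<^sub>R ebas 0 + norm (oIm x) *\<^sub>R I" using oIm_decomp[of x] False by (simp add: I_def)
    ultimately show ?thesis using a unfolding OmegaD_def by blast
  qed
qed

lemma oreals_iff: "x \<in> oreals \<longleftrightarrow> oIm x = 0"
proof
  assume "x \<in> oreals" then show "oIm x = 0" by (auto simp: oreals_def oIm_linear)
next
  assume "oIm x = 0" then show "x \<in> oreals" using oIm_decomp[of x] by (auto simp: oreals_def)
qed
lemma diff_comp: "(\<lambda>y. comp y k) differentiable (at w)"
  unfolding comp_def by (rule bounded_linear_imp_differentiable[OF bounded_linear_vec_nth])

lemma diff_const: "(\<lambda>y. c) differentiable (at w)"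
  by simp

lemma diff_omul: "f differentiable (at w) \<Longrightarrow> g differentiable (at w) \<Longrightarrow> (\<lambda>y. omul (f y) (g y)) differentiable (at w)"
  unfolding differentiable_def using bounded_bilinear.FDERIV[OF omul_bilinear] by blast

lemma diff_oIm: "oIm differentiable (at w)"
proof -
  have "(\<lambda>y. \<Sum>h\<in>{1..7}. comp y h *\<^sub>R ebas h) differentiable (at w)"
    by (intro differentiable_sum differentiable_scaleR diff_comp diff_const ballI finite_atLeastAtMost)
  then show ?thesis unfolding oIm_def[abs_def] .
qed

lemma diff_oIm': "(\<lambda>y. oIm y) differentiable (at w)"
  using diff_oIm by (simp add: eta_contract_eq)

lemma diff_oinv: assumes "a \<noteq> 0" shows "oinv differentiable (at a)"
proof -
  have e: "oinv = (\<lambda>x. inverse (inner x x) *\<^sub>R (comp x 0 *\<^sub>R ebas 0 - oIm x))"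
    by (rule ext) (simp add: oinv_def oconj_def power2_norm_eq_inner divide_inverse)
  have "(\<lambda>x. inverse (inner x x) *\<^sub>R (comp x 0 *\<^sub>R ebas 0 - oIm x)) differentiable (at a)"
    using assms
    by (intro differentiable_scaleR differentiable_inverse differentiable_inner differentiable_diff
        diff_comp diff_const diff_oIm' differentiable_ident) auto
  then show ?thesis unfolding e .
qed

lemma diff_Lop: assumes "pd m f differentiable (at w)" "pd n f differentiable (at w)"
  shows "Lop m n f differentiable (at w)"
proof -
  have "(\<lambda>y. comp y m *\<^sub>R pd n f y - comp y n *\<^sub>R pd m f y) differentiable (at w)"
    using assms by (intro differentiable_scaleR differentiable_diff diff_comp) auto
  then show ?thesis unfolding Lop_def[abs_def] .
qed

lemma diff_Gamma: assumes "\<And>i. i < 8 \<Longrightarrow> pd i f differentiable (at w)"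
  shows "Gamma f differentiable (at w)"
proof -
  have "(\<lambda>y. - (\<Sum>m\<in>{1..7}. \<Sum>n\<in>{m<..7}. omul (ebas m) (omul (ebas n) (Lop m n f y)))) differentiable (at w)"
    using assms
    by (intro differentiable_minus differentiable_sum ballI finite_atLeastAtMost finite_greaterThanAtMost
         diff_omul diff_const diff_Lop) auto
  then show ?thesis unfolding Gamma_def[abs_def] .
qed

lemma diff_g2: assumes "\<And>i. i < 8 \<Longrightarrow> pd i f differentiable (at w)" "oIm w \<noteq> 0"
  shows "(\<lambda>y. omul (oinv (oIm y)) (Gamma f y)) differentiable (at w)"
  by (intro diff_omul diff_Gamma assms differentiable_compose[of oinv oIm] diff_oinv diff_oIm) (use assms in auto)

lemma diff_g1: assumes "\<And>i. i < 8 \<Longrightarrow> pd i f differentiable (at w)" "f differentiable (at w)"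
  shows "(\<lambda>y. f y - (1/6) *\<^sub>R Gamma f y) differentiable (at w)"
  by (intro differentiable_diff differentiable_scaleR diff_const diff_Gamma assms)
lemma rot_in_sphere: assumes "1 \<le> m" "m < 8" "1 \<le> n" "n < 8" "m \<noteq> n"
  shows "comp (rot m n w t) 0 = comp w 0 \<and> norm (oIm (rot m n w t)) = norm (oIm w)"
  using assms rot_comp0 norm_rot by auto

lemma SPHERE:
  fixes g :: "oct \<Rightarrow> oct" and \<alpha> r :: real
  assumes H: "\<And>w. comp w 0 = \<alpha> \<Longrightarrow> norm (oIm w) = r \<Longrightarrow> g differentiable (at w) \<and>
      (\<forall>m n. 1 \<le> m \<longrightarrow> m < n \<longrightarrow> n \<le> 7 \<longrightarrow> Lop m n g w = 0)"
    and w: "comp w 0 = \<alpha>" "norm (oIm w) = r"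
  shows "g w = g (\<alpha> *\<^sub>R ebas 0 + r *\<^sub>R ebas 1)"
proof -
  define c where "c = \<alpha> *\<^sub>R ebas 0 + r *\<^sub>R ebas 1"
  define S where "S = {w. comp w 0 = \<alpha> \<and> norm (oIm w) = r}"
  have rS: "rot m n w t \<in> S" if "w \<in> S" "1 \<le> m" "m < n" "n \<le> 7" for w m n t
    using that rot_in_sphere[of m n w t] by (auto simp: S_def)
  have RC: "g (rot m n w t) = g w" if "w \<in> S" "1 \<le> m" "m < n" "n \<le> 7" for w m n t
  proof (rule ROTCONST)
    show "m < 8" "n < 8" "m \<noteq> n" using that by auto
    fix s show "g differentiable at (rot m n w s) \<and> Lop m n g (rot m n w s) = 0"
      using H rS[OF that, of s] that by (auto simp: S_def)
  qed
  have P: "\<forall>w\<in>S. (\<forall>j. k < j \<and> j \<le> 7 \<longrightarrow> comp w j = 0) \<longrightarrow> g w = g c" if "1 \<le> k" "k \<le> 7" for k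
    using that
  proof (induction k)
    case 0 then show ?case by simp
  next
    case (Suc k)
    show ?case
    proof (cases "k = 0")
      case True
      show ?thesis
      proof (intro ballI impI)
        fix w assume wS: "w \<in> S" and z: "\<forall>j. Suc k < j \<and> j \<le> 7 \<longrightarrow> comp w j = 0"
        have oi: "oIm w = comp w 1 *\<^sub>R ebas 1"
          using z True by (intro oct_eqI) (auto dest!: less8_cases simp: comp_oIm comp_ebas)
        then have nr: "\<bar>comp w 1\<bar> = r" using wS norm_ebas[of 1] by (simp add: S_def)
        have w0: "comp w 0 = \<alpha>" using wS by (simp add: S_def)
        show "g w = g c"
        proof (cases "comp w 1 = r")
          case True
          then have "w = c" using oIm_decomp[of w] oi w0 by (simp add: c_def)
          then show ?thesis by simp
        next
          case False
          then have m1: "comp w 1 = - r" using nr by linarith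
          have "rot 1 2 w pi = c"
          proof (rule oct_eqI)
            fix j :: nat assume j8: "j < 8"
            have cw: "comp w i = (if i = 0 then \<alpha> else if i = 1 then - r else 0)" if "i < 8" for i
            proof -
              have "i = 0 \<or> i = 1 \<or> (Suc 0 < i \<and> i \<le> 7)" using that by auto
              then show ?thesis using w0 m1 z True by auto
            qed
            have "comp (rot 1 2 w pi) j = comp w j - 2 * ((if 1 = j then comp w 1 else 0) + (if 2 = j then comp w 2 else 0))"
              using j8 by (simp add: comp_rot)
            also have "\<dots> = comp c j"
              using j8 cw[OF j8] cw[of 1] cw[of 2] by (simp add: c_def comp_ebas)
            finally show "comp (rot 1 2 w pi) j = comp c j" .
          qed
          then show ?thesis using RC[OF wS, of 1 2 pi] by simp
        qed
      qed
    next
      case False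
      then have IH: "\<forall>w\<in>S. (\<forall>j. k < j \<and> j \<le> 7 \<longrightarrow> comp w j = 0) \<longrightarrow> g w = g c"
        using Suc by auto
      have k1: "1 \<le> k" using False by simp
      show ?thesis
      proof (intro ballI impI)
        fix w assume wS: "w \<in> S" and z: "\<forall>j. Suc k < j \<and> j \<le> 7 \<longrightarrow> comp w j = 0"
        define n where "n = Suc k"
        have n: "2 \<le> n" "n \<le> 7" using False Suc.prems by (auto simp: n_def)
        define a where "a = comp w 1"
        define b where "b = comp w n"
        show "g w = g c"
        proof (cases "b = 0")
          case True
          then have "\<forall>j. k < j \<and> j \<le> 7 \<longrightarrow> comp w j = 0"
            using z by (metis Suc_lessI b_def n_def)
          then show ?thesis using IH wS by blast
        next
          case bnz: False
          define \<rho> where "\<rho> = sqrt (a\<^sup>2 + b\<^sup>2)"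
          have rp: "\<rho> > 0" using bnz by (simp add: \<rho>_def add_nonneg_pos)
          have "(a / \<rho>)\<^sup>2 + (- b / \<rho>)\<^sup>2 = 1"
            using rp bnz by (simp add: \<rho>_def power_divide add_divide_distrib[symmetric] add_nonneg_nonneg)
          then obtain t where t: "a / \<rho> = cos t" "- b / \<rho> = sin t"
            using sincos_total_2pi by metis
          define w' where "w' = rot 1 n w t"
          have w'S: "w' \<in> S" using rS[OF wS, of 1 n t] n by (simp add: w'_def)
          have "comp w' n = cos t * b + sin t * a"
            using comp_rot_n[of 1 n w t] n by (simp add: w'_def a_def b_def)
          also have "\<dots> = 0" using rp by (simp add: t[symmetric] field_simps)
          finally have wn: "comp w' n = 0" .
          have "\<forall>j. k < j \<and> j \<le> 7 \<longrightarrow> comp w' j = 0"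
          proof (intro allI impI)
            fix j assume j: "k < j \<and> j \<le> 7"
            show "comp w' j = 0"
            proof (cases "j = n")
              case True then show ?thesis using wn by simp
            next
              case False
              then have "Suc k < j" using j n_def by auto
              moreover have "comp w' j = comp w j"
                using False j n k1 by (simp add: w'_def comp_rot)
              ultimately show ?thesis using z j by auto
            qed
          qed
          then have "g w' = g c" using IH w'S by blast
          moreover have "g w' = g w" using RC[OF wS, of 1 n t] n by (simp add: w'_def)
          ultimately show ?thesis by simp
        qed
      qed
    qed
  qed
  have "w \<in> S" using w by (simp add: S_def)
  then show ?thesis using P[of 7] unfolding c_def by auto
qed
lemma omul_zero_right: "omul x 0 = 0"
  using omul_scaleR_right[of x 0 0] by simp

lemma sphere_unit: assumes "r > 0" "norm (oIm w) = r"
  shows "(1 / r) *\<^sub>R oIm w \<in> SS" "w = comp w 0 *\<^sub>R ebas 0 + r *\<^sub>R ((1 / r) *\<^sub>R oIm w)"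
proof -
  show "(1 / r) *\<^sub>R oIm w \<in> SS" using assms by (simp add: SS_iff)
  show "w = comp w 0 *\<^sub>R ebas 0 + r *\<^sub>R ((1 / r) *\<^sub>R oIm w)"
    using assms oIm_decomp[of w] by simp
qed

lemma FWD_rep:
  assumes rep: "\<forall>\<alpha> \<beta> I. (\<alpha>, \<beta>) \<in> D \<longrightarrow> I \<in> SS \<longrightarrow> f (\<alpha> *\<^sub>R ebas 0 + \<beta> *\<^sub>R I) = F1 (\<alpha>, \<beta>) + omul I (F2 (\<alpha>, \<beta>))"
    and D: "(\<alpha>, r) \<in> D" and r: "r > 0" and w: "comp w 0 = \<alpha>" "norm (oIm w) = r"
  shows "f w = F1 (\<alpha>, r) + omul (oIm w) ((1 / r) *\<^sub>R F2 (\<alpha>, r))"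
proof -
  have "f w = F1 (\<alpha>, r) + omul ((1 / r) *\<^sub>R oIm w) (F2 (\<alpha>, r))"
    using rep D sphere_unit[OF r w(2)] w(1) by metis
  then show ?thesis by (simp add: omul_scaleR_left omul_scaleR_right)
qed

lemma FWD_Lop:
  assumes rep: "\<And>w. comp w 0 = \<alpha> \<Longrightarrow> norm (oIm w) = r \<Longrightarrow> f w = A0 + omul (oIm w) X"
    and w: "comp w 0 = \<alpha>" "norm (oIm w) = r" and fd: "f differentiable (at w)"
    and mn: "1 \<le> m" "m < 8" "1 \<le> n" "n < 8" "m \<noteq> n"
  shows "Lop m n f w = omul (comp w m *\<^sub>R ebas n - comp w n *\<^sub>R ebas m) X"
proof (rule ROTDERIV[OF mn(2,4,5) fd])
  define P where "P = comp w m *\<^sub>R ebas m + comp w n *\<^sub>R ebas n"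
  define Q where "Q = comp w m *\<^sub>R ebas n - comp w n *\<^sub>R ebas m"
  fix t
  have e: "oIm (rot m n w t) = oIm w + (cos t - 1) *\<^sub>R P + sin t *\<^sub>R Q"
    using mn by (simp add: rot_def oIm_linear oIm_ebas P_def Q_def)
  have "f (rot m n w t) = A0 + omul (oIm (rot m n w t)) X"
    using rep rot_in_sphere[OF mn, of w t] w by simp
  also have "\<dots> = f w + (cos t - 1) *\<^sub>R omul P X + sin t *\<^sub>R omul Q X"
    unfolding e using rep[OF w] by (simp add: omul_add_left omul_scaleR_left)
  finally show "f (rot m n w t) = f w + (cos t - 1) *\<^sub>R omul P X + sin t *\<^sub>R omul (comp w m *\<^sub>R ebas n - comp w n *\<^sub>R ebas m) X"
    by (simp add: Q_def)
qed

lemma Gamma_formula: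
  assumes "\<And>m n. 1 \<le> m \<Longrightarrow> m < n \<Longrightarrow> n \<le> 7 \<Longrightarrow> Lop m n f w = omul (comp w m *\<^sub>R ebas n - comp w n *\<^sub>R ebas m) X"
  shows "Gamma f w = 6 *\<^sub>R omul (oIm w) X"
proof -
  have "Gamma f w = - (\<Sum>m\<in>{1..7}. \<Sum>n\<in>{m<..7}. omul (ebas m) (omul (ebas n) (omul (comp w m *\<^sub>R ebas n - comp w n *\<^sub>R ebas m) X)))"
    unfolding Gamma_def using assms by (intro arg_cong[where f=uminus] sum.cong refl) auto
  then show ?thesis using gamma_sum by simp
qed
theorem lemma2p13:
  fixes D :: "(real \<times> real) set" and f :: "oct \<Rightarrow> oct"
  assumes "open D" and "D \<noteq> {}"
    and "\<And>\<alpha> \<beta>. (\<alpha>, \<beta>) \<in> D \<Longrightarrow> (\<alpha>, - \<beta>) \<in> D"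
    and "connected (OmegaD D)"
    and "C2_on (OmegaD D) f"
  shows "slice_function D f \<longleftrightarrow>
    (\<forall>x \<in> OmegaD D - oreals. \<forall>m n. 1 \<le> m \<longrightarrow> m < n \<longrightarrow> n \<le> 7 \<longrightarrow>
        Lop m n (\<lambda>y. omul (oinv (oIm y)) (Gamma f y)) x = 0 \<and>
        Lop m n (\<lambda>y. f y - (1/6) *\<^sub>R Gamma f y) x = 0)"
proof -
  note sym = assms(3)
  have fd: "\<And>x. x \<in> OmegaD D \<Longrightarrow> f differentiable (at x)"
    and pdd: "\<And>i x. i < 8 \<Longrightarrow> x \<in> OmegaD D \<Longrightarrow> pd i f differentiable (at x)"
    using assms(5) unfolding C2_on_def by auto
  define g1 where "g1 = (\<lambda>y. f y - (1/6) *\<^sub>R Gamma f y)"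
  define g2 where "g2 = (\<lambda>y. omul (oinv (oIm y)) (Gamma f y))"
  have inS: "w \<in> OmegaD D - oreals" if "(\<alpha>, r) \<in> D" "r > 0" "comp w 0 = \<alpha>" "norm (oIm w) = r" for w \<alpha> r
    using that OmegaD_iff[OF sym, of w] oreals_iff[of w] by auto
  have dg1: "g1 differentiable (at w)" and dg2: "g2 differentiable (at w)" if "w \<in> OmegaD D - oreals" for w
    using that diff_g1[of f w] diff_g2[of f w] fd pdd oreals_iff[of w] by (auto simp: g1_def g2_def)
  show ?thesis
  proof
    assume "slice_function D f"
    then obtain F1 F2 where rep: "\<forall>\<alpha> \<beta> I. (\<alpha>, \<beta>) \<in> D \<longrightarrow> I \<in> SS \<longrightarrow> f (\<alpha> *\<^sub>R ebas 0 + \<beta> *\<^sub>R I) = F1 (\<alpha>, \<beta>) + omul I (F2 (\<alpha>, \<beta>))"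
      unfolding slice_function_def by blast
    show "\<forall>x \<in> OmegaD D - oreals. \<forall>m n. 1 \<le> m \<longrightarrow> m < n \<longrightarrow> n \<le> 7 \<longrightarrow>
        Lop m n (\<lambda>y. omul (oinv (oIm y)) (Gamma f y)) x = 0 \<and>
        Lop m n (\<lambda>y. f y - (1/6) *\<^sub>R Gamma f y) x = 0"
    proof (intro ballI allI impI)
      fix x and m n :: nat assume x: "x \<in> OmegaD D - oreals" and mn: "1 \<le> m" "m < n" "n \<le> 7"
      define \<alpha> where "\<alpha> = comp x 0"
      define r where "r = norm (oIm x)"
      have r: "r > 0" using x oreals_iff[of x] by (simp add: r_def)
      have D: "(\<alpha>, r) \<in> D" using x OmegaD_iff[OF sym, of x] by (simp add: \<alpha>_def r_def)
      define X where "X = (1 / r) *\<^sub>R F2 (\<alpha>, r)"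
      have frep: "f w = F1 (\<alpha>, r) + omul (oIm w) X" if "comp w 0 = \<alpha>" "norm (oIm w) = r" for w
        using FWD_rep[OF rep D r that] by (simp add: X_def)
      have vals: "g1 w = F1 (\<alpha>, r) \<and> g2 w = 6 *\<^sub>R X" if w: "comp w 0 = \<alpha>" "norm (oIm w) = r" for w
      proof -
        have wS: "w \<in> OmegaD D - oreals" using inS[OF D r w] .
        have "Lop m' n' f w = omul (comp w m' *\<^sub>R ebas n' - comp w n' *\<^sub>R ebas m') X"
          if "1 \<le> m'" "m' < n'" "n' \<le> 7" for m' n'
          using FWD_Lop[OF frep w fd, of m' n'] wS that by auto
        then have G: "Gamma f w = 6 *\<^sub>R omul (oIm w) X" by (rule Gamma_formula)
        have nz: "oIm w \<noteq> 0" using wS oreals_iff by auto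
        show ?thesis
          using G frep[OF w] omul_inv_cancel(1)[OF comp_oIm0 nz, of X]
          by (simp add: g1_def g2_def omul_scaleR_right)
      qed
      have m8: "m < 8" "n < 8" "m \<noteq> n" using mn by auto
      have xs: "comp x 0 = \<alpha>" "norm (oIm x) = r" by (simp_all add: \<alpha>_def r_def)
      have rs: "comp (rot m n x t) 0 = \<alpha>" "norm (oIm (rot m n x t)) = r" for t
        using rot_in_sphere[of m n x t] mn xs by auto
      have "Lop m n g2 x = 0"
        by (rule ROTDERIV[OF m8 dg2[OF x], where A = "g2 x" and B = 0]) (use vals rs xs in simp)
      moreover have "Lop m n g1 x = 0"
        by (rule ROTDERIV[OF m8 dg1[OF x], where A = "g1 x" and B = 0]) (use vals rs xs in simp)
      ultimately show "Lop m n (\<lambda>y. omul (oinv (oIm y)) (Gamma f y)) x = 0 \<and>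
        Lop m n (\<lambda>y. f y - (1/6) *\<^sub>R Gamma f y) x = 0" by (simp add: g1_def g2_def)
    qed
  next
    assume H: "\<forall>x \<in> OmegaD D - oreals. \<forall>m n. 1 \<le> m \<longrightarrow> m < n \<longrightarrow> n \<le> 7 \<longrightarrow>
        Lop m n (\<lambda>y. omul (oinv (oIm y)) (Gamma f y)) x = 0 \<and>
        Lop m n (\<lambda>y. f y - (1/6) *\<^sub>R Gamma f y) x = 0"
    have sph: "g1 w = g1 (\<alpha> *\<^sub>R ebas 0 + r *\<^sub>R ebas 1) \<and> g2 w = g2 (\<alpha> *\<^sub>R ebas 0 + r *\<^sub>R ebas 1)"
      if D: "(\<alpha>, r) \<in> D" and r: "r > 0" and w: "comp w 0 = \<alpha>" "norm (oIm w) = r" for \<alpha> r w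
    proof
      show "g1 w = g1 (\<alpha> *\<^sub>R ebas 0 + r *\<^sub>R ebas 1)"
        by (rule SPHERE[OF _ w]) (use H inS[OF D r] dg1 in \<open>auto simp: g1_def\<close>)
      show "g2 w = g2 (\<alpha> *\<^sub>R ebas 0 + r *\<^sub>R ebas 1)"
        by (rule SPHERE[OF _ w]) (use H inS[OF D r] dg2 in \<open>auto simp: g2_def\<close>)
    qed
    define F1 where "F1 = (\<lambda>(\<alpha>::real, \<beta>::real). if \<beta> = 0 then f (\<alpha> *\<^sub>R ebas 0) else g1 (\<alpha> *\<^sub>R ebas 0 + \<bar>\<beta>\<bar> *\<^sub>R ebas 1))"
    define F2 where "F2 = (\<lambda>(\<alpha>::real, \<beta>::real). (\<beta> / 6) *\<^sub>R g2 (\<alpha> *\<^sub>R ebas 0 + \<bar>\<beta>\<bar> *\<^sub>R ebas 1))"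
    show "slice_function D f"
      unfolding slice_function_def
    proof (intro exI conjI allI impI)
      fix \<alpha> \<beta> assume "(\<alpha>, \<beta>) \<in> D"
      show "F1 (\<alpha>, - \<beta>) = F1 (\<alpha>, \<beta>)" by (simp add: F1_def)
      show "F2 (\<alpha>, - \<beta>) = - F2 (\<alpha>, \<beta>)" by (simp add: F2_def)
    next
      fix \<alpha> \<beta> I assume D: "(\<alpha>, \<beta>) \<in> D" and I: "I \<in> SS"
      have I': "comp I 0 = 0" "norm I = 1" using I SS_iff by auto
      show "f (\<alpha> *\<^sub>R ebas 0 + \<beta> *\<^sub>R I) = F1 (\<alpha>, \<beta>) + omul I (F2 (\<alpha>, \<beta>))"
      proof (cases "\<beta> = 0")
        case True then show ?thesis by (simp add: F1_def F2_def omul_zero_right)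
      next
        case False
        define y where "y = \<alpha> *\<^sub>R ebas 0 + \<beta> *\<^sub>R I"
        define c where "c = \<alpha> *\<^sub>R ebas 0 + \<bar>\<beta>\<bar> *\<^sub>R ebas 1"
        have y0: "comp y 0 = \<alpha>" using I' by (simp add: y_def comp_ebas)
        have yi: "oIm y = \<beta> *\<^sub>R I" using I' by (simp add: y_def oIm_linear oIm_imag)
        have yn: "norm (oIm y) = \<bar>\<beta>\<bar>" using yi I' by simp
        have Da: "(\<alpha>, \<bar>\<beta>\<bar>) \<in> D" using D sym by (cases "\<beta> \<ge> 0") auto
        have rp: "\<bar>\<beta>\<bar> > 0" using False by simp
        have gs: "g1 y = g1 c" "g2 y = g2 c" using sph[OF Da rp y0 yn] by (simp_all add: c_def)
        have nz: "oIm y \<noteq> 0" using yn rp by auto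
        have "Gamma f y = omul (oIm y) (g2 y)"
          using omul_inv_cancel(2)[OF comp_oIm0 nz] by (simp add: g2_def)
        then have "f y = g1 y + (1/6) *\<^sub>R omul (oIm y) (g2 y)" by (simp add: g1_def)
        also have "\<dots> = F1 (\<alpha>, \<beta>) + omul I (F2 (\<alpha>, \<beta>))"
          using False gs yi by (simp add: F1_def F2_def c_def omul_scaleR_left omul_scaleR_right)
        finally show ?thesis by (simp add: y_def)
      qed
    qed
  qed
qed

end
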